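(* Let $\mathfrak a_{1.3}$ be the Lie algebra of vector fields on $\mathbb R^3$ with coordinates $(z_1,z_2,w)$ spanned by \[ P^1=\partial_{z_1},\quad D^1=z_1\partial_{z_1}-w\partial_w,\quad K=z_1^2\partial_{z_1}+z_1z_2\partial_{z_2}+\big(z_1w+\tfrac16z_2^{3}\big)\partial_w, \] \[ D^2=z_2\partial_{z_2}+3w\partial_w,\quad P^2=\partial_{z_2},\quad H=z_1\partial_{z_2}+\tfrac12z_2^{2}\partial_w,\quad R(\alpha)=\alpha(z_1)z_2\partial_w,\quad Z(\sigma)=\sigma(z_1)\partial_w, \] where $\alpha$ and $\sigma$ run through the set of smooth functions of $z_1$. Then the radical (the maximal solvable ideal) $\mathfrak r$ of $\mathfrak a_{1.3}$ coincides with $\big\langle D^2,\,P^2,\,H,\,R(\alpha),\,Z(\sigma)\big\rangle$, the span of $D^2$, $P^2$, $H$ and all $R(\alpha)$, $Z(\sigma)$.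
   Context: $\mathfrak a_{1.3}$ is the maximal Lie invariance (pseudo)algebra of the partial differential equation $w_{122}+w_{22}w_{222}=0$ for $w=w(z_1,z_2)$, where subscripts $1,2$ denote differentiation with respect to $z_1,z_2$. The bracket is the Lie bracket of vector fields. *)

theory Defs
  imports "HOL-Analysis.Analysis"
begin

text \<open>Vector fields on R^3 with coordinates (z1, z2, w), as maps R^3 -> R^3
  (component i = coefficient of the i-th coordinate vector field).\<close>
type_synonym vf = "real \<times> real \<times> real \<Rightarrow> real \<times> real \<times> real"

definition smooth_fun :: "(real \<Rightarrow> real) \<Rightarrow> bool" where
  "smooth_fun f \<longleftrightarrow> (\<forall>k x. ((deriv ^^ k) f) differentiable (at x))"

text \<open>Lie bracket of vector fields: [X,Y] = DY . X - DX . Y, i.e. [X,Y] = XY - YX as derivations.\<close>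
definition vf_bracket :: "vf \<Rightarrow> vf \<Rightarrow> vf" where
  "vf_bracket X Y = (\<lambda>p. frechet_derivative Y (at p) (X p) - frechet_derivative X (at p) (Y p))"

definition vf_span :: "vf set \<Rightarrow> vf set" where
  "vf_span S = {f. \<exists>F c. finite F \<and> F \<subseteq> S \<and> f = (\<lambda>p. \<Sum>v\<in>F. c v *\<^sub>R v p)}"

definition vf_subspace :: "vf set \<Rightarrow> bool" where
  "vf_subspace I \<longleftrightarrow> (\<lambda>p. 0) \<in> I \<and> (\<forall>x\<in>I. \<forall>y\<in>I. (\<lambda>p. x p + y p) \<in> I)
     \<and> (\<forall>c. \<forall>x\<in>I. (\<lambda>p. c *\<^sub>R x p) \<in> I)"

definition lie_ideal :: "vf set \<Rightarrow> vf set \<Rightarrow> bool" where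
  "lie_ideal A I \<longleftrightarrow> I \<subseteq> A \<and> vf_subspace I \<and> (\<forall>x\<in>A. \<forall>y\<in>I. vf_bracket x y \<in> I)"

fun derived :: "vf set \<Rightarrow> nat \<Rightarrow> vf set" where
  "derived I 0 = I"
| "derived I (Suc k) = vf_span {vf_bracket x y | x y. x \<in> derived I k \<and> y \<in> derived I k}"

definition solvable :: "vf set \<Rightarrow> bool" where
  "solvable I \<longleftrightarrow> (\<exists>k. derived I k = {\<lambda>p. 0})"

definition solvable_ideal :: "vf set \<Rightarrow> vf set \<Rightarrow> bool" where
  "solvable_ideal A I \<longleftrightarrow> lie_ideal A I \<and> solvable I"

definition is_radical :: "vf set \<Rightarrow> vf set \<Rightarrow> bool" where
  "is_radical A r \<longleftrightarrow> solvable_ideal A r \<and> (\<forall>J. solvable_ideal A J \<longrightarrow> J \<subseteq> r)"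

definition P1 :: vf where "P1 = (\<lambda>(z1, z2, w). (1, 0, 0))"
definition D1 :: vf where "D1 = (\<lambda>(z1, z2, w). (z1, 0, - w))"
definition K :: vf where "K = (\<lambda>(z1, z2, w). (z1^2, z1 * z2, z1 * w + z2^3 / 6))"
definition D2 :: vf where "D2 = (\<lambda>(z1, z2, w). (0, z2, 3 * w))"
definition P2 :: vf where "P2 = (\<lambda>(z1, z2, w). (0, 1, 0))"
definition H :: vf where "H = (\<lambda>(z1, z2, w). (0, z1, z2^2 / 2))"
definition R :: "(real \<Rightarrow> real) \<Rightarrow> vf" where "R \<alpha> = (\<lambda>(z1, z2, w). (0, 0, \<alpha> z1 * z2))"
definition Z :: "(real \<Rightarrow> real) \<Rightarrow> vf" where "Z \<sigma> = (\<lambda>(z1, z2, w). (0, 0, \<sigma> z1))"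

definition a13 :: "vf set" where
  "a13 = vf_span ({P1, D1, K, D2, P2, H} \<union> {R \<alpha> | \<alpha>. smooth_fun \<alpha>} \<union> {Z \<sigma> | \<sigma>. smooth_fun \<sigma>})"

definition r13 :: "vf set" where
  "r13 = vf_span ({D2, P2, H} \<union> {R \<alpha> | \<alpha>. smooth_fun \<alpha>} \<union> {Z \<sigma> | \<sigma>. smooth_fun \<sigma>})"

end

theory Submission
  imports Defs
begin


definition Gf :: "real \<Rightarrow> real \<Rightarrow> real \<Rightarrow> real \<Rightarrow> real \<Rightarrow> real \<Rightarrow> (real \<Rightarrow> real) \<Rightarrow> (real \<Rightarrow> real) \<Rightarrow> vf" where
  "Gf a b c d e h \<alpha> \<sigma> = (\<lambda>(z1, z2, w). (a + b*z1 + c*z1^2, e + h*z1 + d*z2 + c*z1*z2,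
      (3*d - b)*w + c*(z1*w + z2^3/6) + h*z2^2/2 + \<alpha> z1 * z2 + \<sigma> z1))"

definition GD :: "real \<Rightarrow> real \<Rightarrow> real \<Rightarrow> real \<Rightarrow> real \<Rightarrow> real \<Rightarrow> (real \<Rightarrow> real) \<Rightarrow> (real \<Rightarrow> real) \<Rightarrow> real \<times> real \<times> real \<Rightarrow> real \<times> real \<times> real \<Rightarrow> real \<times> real \<times> real" where
  "GD a b c d e h \<alpha> \<sigma> p = (case p of (x, y, z) \<Rightarrow> (\<lambda>(v1, v2, v3). (b* v1 + 2*c*x* v1, h* v1 + d* v2 + c*(v1*y + x* v2),
      (3*d-b)* v3 + c*(v1*z + x* v3 + y^2/2* v2) + h*y* v2 + deriv \<alpha> x * v1 * y + \<alpha> x * v2 + deriv \<sigma> x * v1)))"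

lemma Gf_has_derivative:
  assumes "\<And>x. \<alpha> differentiable at x" "\<And>x. \<sigma> differentiable at x"
  shows "(Gf a b c d e h \<alpha> \<sigma> has_derivative GD a b c d e h \<alpha> \<sigma> p) (at p)"
proof -
  obtain x y z where p: "p = (x, y, z)" by (cases p) auto
  have da: "DERIV \<alpha> t :> deriv \<alpha> t" for t using assms(1) DERIV_deriv_iff_real_differentiable by blast
  have ds: "DERIV \<sigma> t :> deriv \<sigma> t" for t using assms(2) DERIV_deriv_iff_real_differentiable by blast
  have eq: "Gf a b c d e h \<alpha> \<sigma> = (\<lambda>q. (a + b* fst q + c* fst q^2, e + h* fst q + d* fst (snd q) + c* fst q* fst (snd q),
      (3*d - b)* snd (snd q) + c*(fst q* snd (snd q) + fst (snd q)^3/6) + h* fst (snd q)^2/2 + \<alpha> (fst q) * fst (snd q) + \<sigma> (fst q)))"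
    by (auto simp: Gf_def)
  show ?thesis unfolding eq p
    apply (rule derivative_eq_intros DERIV_compose_FDERIV[OF da] DERIV_compose_FDERIV[OF ds] | simp)+
    apply (auto simp: GD_def fun_eq_iff algebra_simps power2_eq_square)
    done
qed


definition "diffb f \<longleftrightarrow> (\<forall>x. f differentiable at x)"

lemma bracket_Gf:
  assumes "diffb \<alpha>" "diffb \<sigma>" "diffb \<beta>" "diffb \<tau>"
  shows "vf_bracket (Gf a b c d e h \<alpha> \<sigma>) (Gf a2 b2 c2 d2 e2 h2 \<beta> \<tau>) =
    Gf (a*b2 - b*a2) (2*(a*c2 - c*a2)) (b*c2 - c*b2) (a*c2 - c*a2)
       (a*h2 - h*a2 + e*d2 - d*e2) (h*d2 - h*b2 + e*c2 - d*h2 - c*e2 + b*h2)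
       (\<lambda>x. (a + b*x + c*x^2) * deriv \<beta> x - (a2 + b2*x + c2*x^2) * deriv \<alpha> x
          + (2*d2 - b2) * \<alpha> x - (2*d - b) * \<beta> x + (e*h2 - h*e2))
       (\<lambda>x. (a + b*x + c*x^2) * deriv \<tau> x - (a2 + b2*x + c2*x^2) * deriv \<sigma> x
          + (3*d2 - b2 + c2*x) * \<sigma> x - (3*d - b + c*x) * \<tau> x + (h*x + e) * \<beta> x - (h2*x + e2) * \<alpha> x)"
proof -
  have f1: "frechet_derivative (Gf a b c d e h \<alpha> \<sigma>) (at p) = GD a b c d e h \<alpha> \<sigma> p" for p
    using Gf_has_derivative[of \<alpha> \<sigma>] assms frechet_derivative_at unfolding diffb_def by metis
  have f2: "frechet_derivative (Gf a2 b2 c2 d2 e2 h2 \<beta> \<tau>) (at p) = GD a2 b2 c2 d2 e2 h2 \<beta> \<tau> p" for p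
    using Gf_has_derivative[of \<beta> \<tau>] assms frechet_derivative_at unfolding diffb_def by metis
  show ?thesis
    unfolding vf_bracket_def f1 f2
    by (auto simp: fun_eq_iff Gf_def GD_def field_simps power2_eq_square power3_eq_cube)
qed



lemma smooth_principle:
  assumes "P f" and d: "\<And>g. P g \<Longrightarrow> (\<forall>x. g differentiable at x)" and s: "\<And>g. P g \<Longrightarrow> P (deriv g)"
  shows "smooth_fun f"
proof -
  have "\<forall>g. P g \<longrightarrow> (\<forall>x. ((deriv ^^ k) g) differentiable (at x))" for k
  proof (induction k)
    case 0 then show ?case using d by simp
  next
    case (Suc k)
    show ?case
    proof (intro allI impI)
      fix g x assume "P g"
      then have "P (deriv g)" by (rule s)
      then have "((deriv ^^ k) (deriv g)) differentiable (at x)" using Suc by blast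
      then show "((deriv ^^ Suc k) g) differentiable (at x)" by (simp add: funpow_Suc_right del: funpow.simps)
    qed
  qed
  then show ?thesis using assms(1) unfolding smooth_fun_def by blast
qed

lemma smooth_diff: "smooth_fun f \<Longrightarrow> f differentiable at x"
  unfolding smooth_fun_def by (metis funpow_0)

lemma smooth_deriv: "smooth_fun f \<Longrightarrow> smooth_fun (deriv f)"
  unfolding smooth_fun_def
  by (metis funpow_Suc_right comp_apply)

lemma smooth_DERIV: "smooth_fun f \<Longrightarrow> DERIV f x :> deriv f x"
  using smooth_diff DERIV_deriv_iff_real_differentiable by blast

lemma smooth_const: "smooth_fun (\<lambda>x. k)"
  by (rule smooth_principle[where P="\<lambda>g. \<exists>k. g = (\<lambda>x. k)"]) auto

lemma smooth_add:
  assumes "smooth_fun f" "smooth_fun g" shows "smooth_fun (\<lambda>x. f x + g x)"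
proof (rule smooth_principle[where P="\<lambda>u. \<exists>f g. smooth_fun f \<and> smooth_fun g \<and> u = (\<lambda>x. f x + g x)"])
  show "\<exists>fa ga. smooth_fun fa \<and> smooth_fun ga \<and> (\<lambda>x. f x + g x) = (\<lambda>x. fa x + ga x)" using assms by blast
next
  fix u assume "\<exists>f g. smooth_fun f \<and> smooth_fun g \<and> u = (\<lambda>x. f x + g x)"
  then obtain f g where fg: "smooth_fun f" "smooth_fun g" "u = (\<lambda>x. f x + g x)" by blast
  show "\<forall>x. u differentiable at x" using fg smooth_diff by auto
  have "deriv u = (\<lambda>x. deriv f x + deriv g x)"
    using fg by (auto intro!: DERIV_imp_deriv derivative_eq_intros smooth_DERIV)
  then show "\<exists>f g. smooth_fun f \<and> smooth_fun g \<and> deriv u = (\<lambda>x. f x + g x)"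
    using fg smooth_deriv by blast
qed

lemma smooth_scale:
  assumes "smooth_fun f" shows "smooth_fun (\<lambda>x. k * f x)"
proof (rule smooth_principle[where P="\<lambda>u. \<exists>f. smooth_fun f \<and> u = (\<lambda>x. k * f x)"])
  show "\<exists>fa. smooth_fun fa \<and> (\<lambda>x. k * f x) = (\<lambda>x. k * fa x)" using assms by blast
next
  fix u assume "\<exists>f. smooth_fun f \<and> u = (\<lambda>x. k * f x)"
  then obtain f where fg: "smooth_fun f" "u = (\<lambda>x. k * f x)" by blast
  show "\<forall>x. u differentiable at x" using fg smooth_diff by auto
  have "deriv u = (\<lambda>x. k * deriv f x)"
    using fg by (auto intro!: DERIV_imp_deriv derivative_eq_intros smooth_DERIV)
  then show "\<exists>f. smooth_fun f \<and> deriv u = (\<lambda>x. k * f x)"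
    using fg smooth_deriv by blast
qed

lemma smooth_xmul_aux:
  assumes "smooth_fun f" "smooth_fun g" shows "smooth_fun (\<lambda>x. f x + x * g x)"
proof (rule smooth_principle[where P="\<lambda>u. \<exists>f g. smooth_fun f \<and> smooth_fun g \<and> u = (\<lambda>x. f x + x * g x)"])
  show "\<exists>fa ga. smooth_fun fa \<and> smooth_fun ga \<and> (\<lambda>x. f x + x * g x) = (\<lambda>x. fa x + x * ga x)" using assms by blast
next
  fix u assume "\<exists>f g. smooth_fun f \<and> smooth_fun g \<and> u = (\<lambda>x. f x + x * g x)"
  then obtain f g where fg: "smooth_fun f" "smooth_fun g" "u = (\<lambda>x. f x + x * g x)" by blast
  show "\<forall>x. u differentiable at x" using fg smooth_diff by auto
  have "deriv u = (\<lambda>x. (deriv f x + g x) + x * deriv g x)"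
    using fg by (auto intro!: DERIV_imp_deriv derivative_eq_intros smooth_DERIV simp: algebra_simps)
  moreover have "smooth_fun (\<lambda>x. deriv f x + g x)" using fg smooth_deriv smooth_add by blast
  ultimately show "\<exists>f g. smooth_fun f \<and> smooth_fun g \<and> deriv u = (\<lambda>x. f x + x * g x)"
    using fg smooth_deriv by blast
qed

lemma smooth_xmul: "smooth_fun f \<Longrightarrow> smooth_fun (\<lambda>x. x * f x)"
  using smooth_xmul_aux[OF smooth_const, of f 0] by simp

lemma smooth_diff2: "smooth_fun f \<Longrightarrow> smooth_fun g \<Longrightarrow> smooth_fun (\<lambda>x. f x - g x)"
  using smooth_add[of f "\<lambda>x. (-1) * g x"] smooth_scale[of g "-1"] by simp

lemma smooth_poly:
  assumes "smooth_fun f" shows "smooth_fun (\<lambda>x. (p + q*x + r*x^2) * f x)"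
proof -
  have "smooth_fun (\<lambda>x. p * f x + (q * (x * f x) + r * (x * (x * f x))))"
    by (intro smooth_add smooth_scale smooth_xmul assms)
  moreover have "(\<lambda>x. p * f x + (q * (x * f x) + r * (x * (x * f x)))) = (\<lambda>x. (p + q*x + r*x^2) * f x)"
    by (auto simp: fun_eq_iff algebra_simps power2_eq_square)
  ultimately show ?thesis by simp
qed

lemma smooth_lin:
  assumes "smooth_fun f" shows "smooth_fun (\<lambda>x. (p + q*x) * f x)"
  using smooth_poly[OF assms, of p q 0] by simp



lemma Gf_add: "(\<lambda>p. Gf a b c d e h \<alpha> \<sigma> p + Gf a2 b2 c2 d2 e2 h2 \<beta> \<tau> p) =
   Gf (a+a2) (b+b2) (c+c2) (d+d2) (e+e2) (h+h2) (\<lambda>x. \<alpha> x + \<beta> x) (\<lambda>x. \<sigma> x + \<tau> x)"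
  by (auto simp: fun_eq_iff Gf_def field_simps)

lemma Gf_scale: "(\<lambda>p. k *\<^sub>R Gf a b c d e h \<alpha> \<sigma> p) =
   Gf (k*a) (k*b) (k*c) (k*d) (k*e) (k*h) (\<lambda>x. k * \<alpha> x) (\<lambda>x. k * \<sigma> x)"
  by (auto simp: fun_eq_iff Gf_def algebra_simps)

lemma Gf_zero: "Gf 0 0 0 0 0 0 (\<lambda>x. 0) (\<lambda>x. 0) = (\<lambda>p. 0)"
  by (auto simp: fun_eq_iff Gf_def zero_prod_def)

definition GS :: "(real \<Rightarrow> real \<Rightarrow> real \<Rightarrow> real \<Rightarrow> real \<Rightarrow> real \<Rightarrow> bool) \<Rightarrow> vf set" where
  "GS P = {Gf a b c d e h \<alpha> \<sigma> | a b c d e h \<alpha> \<sigma>. P a b c d e h \<and> smooth_fun \<alpha> \<and> smooth_fun \<sigma>}"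

lemma GS_I: "P a b c d e h \<Longrightarrow> smooth_fun \<alpha> \<Longrightarrow> smooth_fun \<sigma> \<Longrightarrow> Gf a b c d e h \<alpha> \<sigma> \<in> GS P"
  unfolding GS_def by blast

lemma GS_E: "x \<in> GS P \<Longrightarrow> (\<And>a b c d e h \<alpha> \<sigma>. x = Gf a b c d e h \<alpha> \<sigma> \<Longrightarrow> P a b c d e h \<Longrightarrow> smooth_fun \<alpha> \<Longrightarrow> smooth_fun \<sigma> \<Longrightarrow> Q) \<Longrightarrow> Q"
  unfolding GS_def by blast

lemma sub_GS:
  assumes z: "P 0 0 0 0 0 0"
    and ad: "\<And>a b c d e h a2 b2 c2 d2 e2 h2. P a b c d e h \<Longrightarrow> P a2 b2 c2 d2 e2 h2 \<Longrightarrow> P (a+a2) (b+b2) (c+c2) (d+d2) (e+e2) (h+h2)"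
    and sc: "\<And>k a b c d e h. P a b c d e h \<Longrightarrow> P (k*a) (k*b) (k*c) (k*d) (k*e) (k*h)"
  shows "vf_subspace (GS P)"
  unfolding vf_subspace_def
proof (intro conjI ballI allI)
  show "(\<lambda>p. 0) \<in> GS P"
    using GS_I[of P 0 0 0 0 0 0 "\<lambda>x. 0" "\<lambda>x. 0", OF z smooth_const smooth_const] unfolding Gf_zero .
next
  fix x y assume "x \<in> GS P" "y \<in> GS P"
  then show "(\<lambda>p. x p + y p) \<in> GS P"
    by (elim GS_E) (simp only: Gf_add, intro GS_I ad smooth_add)
next
  fix k x assume "x \<in> GS P"
  then show "(\<lambda>p. k *\<^sub>R x p) \<in> GS P"
    by (elim GS_E) (simp only: Gf_scale, intro GS_I sc smooth_scale)
qed

definition "GA = GS (\<lambda>a b c d e h. True)"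
definition "GR = GS (\<lambda>a b c d e h. a = 0 \<and> b = 0 \<and> c = 0)"
definition "GT1 = GS (\<lambda>a b c d e h. a = 0 \<and> b = 0 \<and> c = 0 \<and> d = 0)"
definition "GT2 = GS (\<lambda>a b c d e h. a = 0 \<and> b = 0 \<and> c = 0 \<and> d = 0 \<and> e = 0 \<and> h = 0)"

lemma sub_GA: "vf_subspace GA" unfolding GA_def by (rule sub_GS) auto
lemma sub_GR: "vf_subspace GR" unfolding GR_def by (rule sub_GS) auto
lemma sub_GT1: "vf_subspace GT1" unfolding GT1_def by (rule sub_GS) auto
lemma sub_GT2: "vf_subspace GT2" unfolding GT2_def by (rule sub_GS) auto

lemma sub_add: "vf_subspace I \<Longrightarrow> x \<in> I \<Longrightarrow> y \<in> I \<Longrightarrow> (\<lambda>p. x p + y p) \<in> I"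
  unfolding vf_subspace_def by blast

lemma sub_scale: "vf_subspace I \<Longrightarrow> x \<in> I \<Longrightarrow> (\<lambda>p. k *\<^sub>R x p) \<in> I"
  unfolding vf_subspace_def by blast

lemma sub_zero: "vf_subspace I \<Longrightarrow> (\<lambda>p. 0) \<in> I"
  unfolding vf_subspace_def by blast

lemma span_sub:
  assumes T: "vf_subspace T" and S: "S \<subseteq> T" shows "vf_span S \<subseteq> T"
proof
  fix f assume "f \<in> vf_span S"
  then obtain F c where F: "finite F" "F \<subseteq> S" "f = (\<lambda>p. \<Sum>v\<in>F. c v *\<^sub>R v p)"
    unfolding vf_span_def by blast
  have "F \<subseteq> S \<Longrightarrow> (\<lambda>p. \<Sum>v\<in>F. c v *\<^sub>R v p) \<in> T" using F(1)
  proof (induction F rule: finite_induct)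
    case empty then show ?case using sub_zero[OF T] by simp
  next
    case (insert x F)
    have "(\<lambda>p. c x *\<^sub>R x p) \<in> T" using T insert S by (intro sub_scale) auto
    moreover have "(\<lambda>p. \<Sum>v\<in>F. c v *\<^sub>R v p) \<in> T" using insert.IH insert.prems by simp
    ultimately have "(\<lambda>p. c x *\<^sub>R x p + (\<Sum>v\<in>F. c v *\<^sub>R v p)) \<in> T"
      using T by (rule sub_add[rotated])
    then show ?case using insert by simp
  qed
  then show "f \<in> T" using F by simp
qed

lemma span_base: "x \<in> S \<Longrightarrow> x \<in> vf_span S"
  unfolding vf_span_def
  by (rule CollectI, rule exI[of _ "{x}"], rule exI[of _ "\<lambda>_. 1"]) auto

lemma span_subspace: "vf_subspace (vf_span S)"
  unfolding vf_subspace_def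
proof (intro conjI ballI allI)
  show "(\<lambda>p. 0) \<in> vf_span S" unfolding vf_span_def
    by (rule CollectI, rule exI[of _ "{}"]) auto
next
  fix x y assume "x \<in> vf_span S" "y \<in> vf_span S"
  then obtain F1 c1 F2 c2 where F: "finite F1" "F1 \<subseteq> S" "x = (\<lambda>p. \<Sum>v\<in>F1. c1 v *\<^sub>R v p)"
    "finite F2" "F2 \<subseteq> S" "y = (\<lambda>p. \<Sum>v\<in>F2. c2 v *\<^sub>R v p)"
    unfolding vf_span_def by blast
  define c where "c v = (if v \<in> F1 then c1 v else 0) + (if v \<in> F2 then c2 v else 0)" for v
  have "(\<lambda>p. x p + y p) = (\<lambda>p. \<Sum>v\<in>F1 \<union> F2. c v *\<^sub>R v p)"
  proof
    fix p
    have "(\<Sum>v\<in>F1 \<union> F2. c v *\<^sub>R v p) = (\<Sum>v\<in>F1 \<union> F2. (if v \<in> F1 then c1 v *\<^sub>R v p else 0))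
       + (\<Sum>v\<in>F1 \<union> F2. (if v \<in> F2 then c2 v *\<^sub>R v p else 0))"
      unfolding sum.distrib[symmetric] by (rule sum.cong) (auto simp: c_def scaleR_add_left)
    also have "\<dots> = (\<Sum>v\<in>(F1 \<union> F2) \<inter> F1. c1 v *\<^sub>R v p) + (\<Sum>v\<in>(F1 \<union> F2) \<inter> F2. c2 v *\<^sub>R v p)"
      using F by (simp only: sum.inter_restrict finite_UnI)
    also have "\<dots> = (\<Sum>v\<in>F1. c1 v *\<^sub>R v p) + (\<Sum>v\<in>F2. c2 v *\<^sub>R v p)"
      by (simp add: Int_absorb1 Int_absorb2)
    finally show "x p + y p = (\<Sum>v\<in>F1 \<union> F2. c v *\<^sub>R v p)" using F by simp
  qed
  then show "(\<lambda>p. x p + y p) \<in> vf_span S" unfolding vf_span_def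
    by (intro CollectI exI[of _ "F1 \<union> F2"] exI[of _ c]) (use F in simp)
next
  fix k x assume "x \<in> vf_span S"
  then obtain F c where F: "finite F" "F \<subseteq> S" "x = (\<lambda>p. \<Sum>v\<in>F. c v *\<^sub>R v p)"
    unfolding vf_span_def by blast
  have "(\<lambda>p. k *\<^sub>R x p) = (\<lambda>p. \<Sum>v\<in>F. (k * c v) *\<^sub>R v p)"
    using F by (simp add: scaleR_sum_right)
  then show "(\<lambda>p. k *\<^sub>R x p) \<in> vf_span S" unfolding vf_span_def
    by (intro CollectI exI[of _ F] exI[of _ "\<lambda>v. k * c v"]) (use F in simp)
qed

lemma sub_lin: "vf_subspace I \<Longrightarrow> x \<in> I \<Longrightarrow> y \<in> I \<Longrightarrow> (\<lambda>p. k *\<^sub>R x p + y p) \<in> I"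
  using sub_add[of I "\<lambda>p. k *\<^sub>R x p" y] sub_scale[of I x k] by blast

lemma gens:
  "P1 = Gf 1 0 0 0 0 0 (\<lambda>x. 0) (\<lambda>x. 0)" "D1 = Gf 0 1 0 0 0 0 (\<lambda>x. 0) (\<lambda>x. 0)"
  "K = Gf 0 0 1 0 0 0 (\<lambda>x. 0) (\<lambda>x. 0)" "D2 = Gf 0 0 0 1 0 0 (\<lambda>x. 0) (\<lambda>x. 0)"
  "P2 = Gf 0 0 0 0 1 0 (\<lambda>x. 0) (\<lambda>x. 0)" "H = Gf 0 0 0 0 0 1 (\<lambda>x. 0) (\<lambda>x. 0)"
  "R \<alpha> = Gf 0 0 0 0 0 0 \<alpha> (\<lambda>x. 0)" "Z \<sigma> = Gf 0 0 0 0 0 0 (\<lambda>x. 0) \<sigma>"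
  by (auto simp: fun_eq_iff Gf_def P1_def D1_def K_def D2_def P2_def H_def R_def Z_def)

lemma Gf_decomp: "Gf a b c d e h \<alpha> \<sigma> = (\<lambda>p. a *\<^sub>R P1 p + (b *\<^sub>R D1 p + (c *\<^sub>R K p + (d *\<^sub>R D2 p
   + (e *\<^sub>R P2 p + (h *\<^sub>R H p + (1 *\<^sub>R R \<alpha> p + Z \<sigma> p)))))))"
  unfolding gens by (auto simp: fun_eq_iff Gf_def algebra_simps)

lemma a13_eq: "a13 = GA"
proof
  show "a13 \<subseteq> GA" unfolding a13_def
    by (rule span_sub[OF sub_GA]) (auto simp: GA_def gens intro!: smooth_const GS_I)
next
  show "GA \<subseteq> a13"
  proof
    fix x assume "x \<in> GA"
    then obtain a b c d e h \<alpha> \<sigma> where x: "x = Gf a b c d e h \<alpha> \<sigma>" "smooth_fun \<alpha>" "smooth_fun \<sigma>"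
      unfolding GA_def by (elim GS_E) blast
    show "x \<in> a13" unfolding x(1) Gf_decomp a13_def
      by (intro sub_lin[OF span_subspace] span_base) (use x in auto)
  qed
qed

lemma r13_eq: "r13 = GR"
proof
  show "r13 \<subseteq> GR" unfolding r13_def
    by (rule span_sub[OF sub_GR]) (auto simp: GR_def gens intro!: smooth_const GS_I)
next
  show "GR \<subseteq> r13"
  proof
    fix x assume "x \<in> GR"
    then obtain d e h \<alpha> \<sigma> where x: "x = Gf 0 0 0 d e h \<alpha> \<sigma>" "smooth_fun \<alpha>" "smooth_fun \<sigma>"
      unfolding GR_def by (elim GS_E) blast
    have "x = (\<lambda>p. d *\<^sub>R D2 p + (e *\<^sub>R P2 p + (h *\<^sub>R H p + (1 *\<^sub>R R \<alpha> p + Z \<sigma> p))))"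
      unfolding x(1) gens by (auto simp: fun_eq_iff Gf_def)
    also have "\<dots> \<in> r13" unfolding r13_def
      by (intro sub_lin[OF span_subspace] span_base) (use x in auto)
    finally show "x \<in> r13" .
  qed
qed



lemma smooth_diffb: "smooth_fun f \<Longrightarrow> diffb f"
  unfolding diffb_def using smooth_diff by blast

lemma br:
  assumes "smooth_fun \<alpha>" "smooth_fun \<sigma>" "smooth_fun \<beta>" "smooth_fun \<tau>"
  shows "\<exists>\<alpha>3 \<sigma>3. smooth_fun \<alpha>3 \<and> smooth_fun \<sigma>3 \<and>
    vf_bracket (Gf a b c d e h \<alpha> \<sigma>) (Gf a2 b2 c2 d2 e2 h2 \<beta> \<tau>) =
    Gf (a*b2 - b*a2) (2*(a*c2 - c*a2)) (b*c2 - c*b2) (a*c2 - c*a2)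
       (a*h2 - h*a2 + e*d2 - d*e2) (h*d2 - h*b2 + e*c2 - d*h2 - c*e2 + b*h2) \<alpha>3 \<sigma>3"
proof (intro exI conjI)
  show "vf_bracket (Gf a b c d e h \<alpha> \<sigma>) (Gf a2 b2 c2 d2 e2 h2 \<beta> \<tau>) = Gf (a*b2 - b*a2) (2*(a*c2 - c*a2)) (b*c2 - c*b2) (a*c2 - c*a2)
       (a*h2 - h*a2 + e*d2 - d*e2) (h*d2 - h*b2 + e*c2 - d*h2 - c*e2 + b*h2)
       (\<lambda>x. (a + b*x + c*x^2) * deriv \<beta> x - (a2 + b2*x + c2*x^2) * deriv \<alpha> x
          + (2*d2 - b2) * \<alpha> x - (2*d - b) * \<beta> x + (e*h2 - h*e2))
       (\<lambda>x. (a + b*x + c*x^2) * deriv \<tau> x - (a2 + b2*x + c2*x^2) * deriv \<sigma> x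
          + (3*d2 - b2 + c2*x) * \<sigma> x - (3*d - b + c*x) * \<tau> x + (h*x + e) * \<beta> x - (h2*x + e2) * \<alpha> x)"
    by (rule bracket_Gf) (use assms smooth_diffb in auto)
  have e1: "(\<lambda>x. (h*x + e) * \<beta> x) = (\<lambda>x. (e + h*x) * \<beta> x)" "(\<lambda>x. (h2*x + e2) * \<alpha> x) = (\<lambda>x. (e2 + h2*x) * \<alpha> x)"
    by (auto simp: algebra_simps)
  show "smooth_fun (\<lambda>x. (a + b*x + c*x^2) * deriv \<beta> x - (a2 + b2*x + c2*x^2) * deriv \<alpha> x
          + (2*d2 - b2) * \<alpha> x - (2*d - b) * \<beta> x + (e*h2 - h*e2))"
    by (intro smooth_add smooth_diff2 smooth_poly smooth_scale smooth_const smooth_deriv assms)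
  have "smooth_fun (\<lambda>x. (a + b*x + c*x^2) * deriv \<tau> x - (a2 + b2*x + c2*x^2) * deriv \<sigma> x
          + (3*d2 - b2 + c2*x) * \<sigma> x - (3*d - b + c*x) * \<tau> x + (e + h*x) * \<beta> x - (e2 + h2*x) * \<alpha> x)"
    by (intro smooth_add smooth_diff2 smooth_poly smooth_lin smooth_deriv assms)
  then show "smooth_fun (\<lambda>x. (a + b*x + c*x^2) * deriv \<tau> x - (a2 + b2*x + c2*x^2) * deriv \<sigma> x
          + (3*d2 - b2 + c2*x) * \<sigma> x - (3*d - b + c*x) * \<tau> x + (h*x + e) * \<beta> x - (h2*x + e2) * \<alpha> x)"
    by (simp add: algebra_simps)
qed

definition Has :: "vf set \<Rightarrow> real \<Rightarrow> real \<Rightarrow> real \<Rightarrow> bool" where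
  "Has I a b c \<longleftrightarrow> (\<exists>d e h \<alpha> \<sigma>. smooth_fun \<alpha> \<and> smooth_fun \<sigma> \<and> Gf a b c d e h \<alpha> \<sigma> \<in> I)"

lemma Has_br:
  assumes "Has A a b c" "Has B a2 b2 c2" "\<forall>x\<in>A. \<forall>y\<in>B. vf_bracket x y \<in> C"
  shows "Has C (a*b2 - b*a2) (2*(a*c2 - c*a2)) (b*c2 - c*b2)"
proof -
  obtain d e h \<alpha> \<sigma> where 1: "smooth_fun \<alpha>" "smooth_fun \<sigma>" "Gf a b c d e h \<alpha> \<sigma> \<in> A"
    using assms(1) unfolding Has_def by blast
  obtain d2 e2 h2 \<beta> \<tau> where 2: "smooth_fun \<beta>" "smooth_fun \<tau>" "Gf a2 b2 c2 d2 e2 h2 \<beta> \<tau> \<in> B"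
    using assms(2) unfolding Has_def by blast
  obtain \<alpha>3 \<sigma>3 where 3: "smooth_fun \<alpha>3" "smooth_fun \<sigma>3"
    "vf_bracket (Gf a b c d e h \<alpha> \<sigma>) (Gf a2 b2 c2 d2 e2 h2 \<beta> \<tau>) =
    Gf (a*b2 - b*a2) (2*(a*c2 - c*a2)) (b*c2 - c*b2) (a*c2 - c*a2)
       (a*h2 - h*a2 + e*d2 - d*e2) (h*d2 - h*b2 + e*c2 - d*h2 - c*e2 + b*h2) \<alpha>3 \<sigma>3"
    using br[OF 1(1,2) 2(1,2)] by blast
  have "vf_bracket (Gf a b c d e h \<alpha> \<sigma>) (Gf a2 b2 c2 d2 e2 h2 \<beta> \<tau>) \<in> C" using assms(3) 1 2 by blast
  then show ?thesis unfolding Has_def using 3 by metis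
qed

lemma Has_scale:
  assumes "vf_subspace I" "Has I a b c" shows "Has I (k*a) (k*b) (k*c)"
proof -
  obtain d e h \<alpha> \<sigma> where 1: "smooth_fun \<alpha>" "smooth_fun \<sigma>" "Gf a b c d e h \<alpha> \<sigma> \<in> I"
    using assms(2) unfolding Has_def by blast
  have "(\<lambda>p. k *\<^sub>R Gf a b c d e h \<alpha> \<sigma> p) \<in> I" by (rule sub_scale[OF assms(1) 1(3)])
  then show ?thesis unfolding Gf_scale Has_def using 1 smooth_scale by blast
qed

lemma Has_scale1:
  assumes "vf_subspace I" "Has I a b c" "a = k * a'" "b = k * b'" "c = k * c'" "k \<noteq> 0"
  shows "Has I a' b' c'"
  using Has_scale[OF assms(1,2), of "1/k"] assms(3-6) by simp

lemma derived_step: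
  assumes "vf_subspace T" "\<forall>x\<in>A. \<forall>y\<in>A. vf_bracket x y \<in> T" "derived I k \<subseteq> A"
  shows "derived I (Suc k) \<subseteq> T"
proof -
  have "{vf_bracket x y |x y. x \<in> derived I k \<and> y \<in> derived I k} \<subseteq> T" using assms(2,3) by blast
  then show ?thesis by (simp only: derived.simps) (rule span_sub[OF assms(1)])
qed

lemma derived_sub: "vf_subspace I \<Longrightarrow> vf_subspace (derived I k)"
  by (cases k) (auto intro: span_subspace)

lemma derived_br: "x \<in> derived I k \<Longrightarrow> y \<in> derived I k \<Longrightarrow> vf_bracket x y \<in> derived I (Suc k)"
  by (auto intro!: span_base)

lemma GS_mono: "(\<And>a b c d e h. P a b c d e h \<Longrightarrow> Q a b c d e h) \<Longrightarrow> GS P \<subseteq> GS Q"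
  unfolding GS_def by blast

lemma r13_ideal: "lie_ideal a13 r13"
  unfolding lie_ideal_def a13_eq r13_eq
proof (intro conjI ballI)
  show "GR \<subseteq> GA" unfolding GR_def GA_def by (rule GS_mono) simp
  show "vf_subspace GR" by (rule sub_GR)
  fix x y assume "x \<in> GA" "y \<in> GR"
  then obtain a b c d e h \<alpha> \<sigma> d2 e2 h2 \<beta> \<tau> where x: "x = Gf a b c d e h \<alpha> \<sigma>" "smooth_fun \<alpha>" "smooth_fun \<sigma>"
    and y: "y = Gf 0 0 0 d2 e2 h2 \<beta> \<tau>" "smooth_fun \<beta>" "smooth_fun \<tau>"
    unfolding GA_def GR_def by (elim GS_E) auto
  from br[OF x(2,3) y(2,3), of a b c d e h 0 0 0 d2 e2 h2]
  show "vf_bracket x y \<in> GR" unfolding x y GR_def by (auto intro!: GS_I)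
qed

lemma r13_solvable: "solvable r13"
proof -
  have s0: "derived r13 0 \<subseteq> GR" using r13_eq by simp
  have s1: "derived r13 (Suc 0) \<subseteq> GT1"
  proof (rule derived_step[OF sub_GT1 _ s0], intro ballI)
    fix x y assume "x \<in> GR" "y \<in> GR"
    then obtain d e h \<alpha> \<sigma> d2 e2 h2 \<beta> \<tau> where x: "x = Gf 0 0 0 d e h \<alpha> \<sigma>" "smooth_fun \<alpha>" "smooth_fun \<sigma>"
      and y: "y = Gf 0 0 0 d2 e2 h2 \<beta> \<tau>" "smooth_fun \<beta>" "smooth_fun \<tau>"
      unfolding GR_def by (elim GS_E) auto
    from br[OF x(2,3) y(2,3), of 0 0 0 d e h 0 0 0 d2 e2 h2]
    show "vf_bracket x y \<in> GT1" unfolding x y GT1_def by (auto intro!: GS_I)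
  qed
  have s2: "derived r13 (Suc (Suc 0)) \<subseteq> GT2"
  proof (rule derived_step[OF sub_GT2 _ s1], intro ballI)
    fix x y assume "x \<in> GT1" "y \<in> GT1"
    then obtain e h \<alpha> \<sigma> e2 h2 \<beta> \<tau> where x: "x = Gf 0 0 0 0 e h \<alpha> \<sigma>" "smooth_fun \<alpha>" "smooth_fun \<sigma>"
      and y: "y = Gf 0 0 0 0 e2 h2 \<beta> \<tau>" "smooth_fun \<beta>" "smooth_fun \<tau>"
      unfolding GT1_def by (elim GS_E) auto
    from br[OF x(2,3) y(2,3), of 0 0 0 0 e h 0 0 0 0 e2 h2]
    show "vf_bracket x y \<in> GT2" unfolding x y GT2_def by (auto intro!: GS_I)
  qed
  have sz: "vf_subspace {\<lambda>p. 0}" unfolding vf_subspace_def by simp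
  have s3: "derived r13 (Suc (Suc (Suc 0))) \<subseteq> {\<lambda>p. 0}"
  proof (rule derived_step[OF sz _ s2], intro ballI)
    fix x y assume "x \<in> GT2" "y \<in> GT2"
    then obtain \<alpha> \<sigma> \<beta> \<tau> where x: "x = Gf 0 0 0 0 0 0 \<alpha> \<sigma>" "smooth_fun \<alpha>" "smooth_fun \<sigma>"
      and y: "y = Gf 0 0 0 0 0 0 \<beta> \<tau>" "smooth_fun \<beta>" "smooth_fun \<tau>"
      unfolding GT2_def by (elim GS_E) auto
    have "vf_bracket x y = Gf 0 0 0 0 0 0 (\<lambda>x. 0) (\<lambda>x. 0)"
      unfolding x y by (subst bracket_Gf) (use x y smooth_diffb in simp_all)
    then show "vf_bracket x y \<in> {\<lambda>p. 0}" using Gf_zero by simp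
  qed
  have "(\<lambda>p. 0) \<in> derived r13 (Suc (Suc (Suc 0)))"
    using sub_zero[OF derived_sub[OF span_subspace]] unfolding r13_def by blast
  with s3 have "derived r13 (Suc (Suc (Suc 0))) = {\<lambda>p. 0}" by blast
  then show ?thesis unfolding solvable_def by blast
qed



lemma Has_GA: "Has a13 a b c"
  unfolding Has_def a13_eq GA_def
  by (rule exI[of _ 0])+ (auto intro!: GS_I smooth_const)

lemma maximal:
  assumes J: "solvable_ideal a13 J" shows "J \<subseteq> r13"
proof
  fix x assume xJ: "x \<in> J"
  have id: "lie_ideal a13 J" and sv: "solvable J" using J unfolding solvable_ideal_def by auto
  have JA: "J \<subseteq> a13" and Js: "vf_subspace J" and Jb: "\<forall>x\<in>a13. \<forall>y\<in>J. vf_bracket x y \<in> J"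
    using id unfolding lie_ideal_def by auto
  obtain a b c d e h \<alpha> \<sigma> where x: "x = Gf a b c d e h \<alpha> \<sigma>" "smooth_fun \<alpha>" "smooth_fun \<sigma>"
  proof -
    have "x \<in> GA" using xJ JA unfolding a13_eq by blast
    then show ?thesis unfolding GA_def by (rule GS_E) (rule that)
  qed
  show "x \<in> r13"
  proof (cases "a = 0 \<and> b = 0 \<and> c = 0")
    case True
    then show ?thesis unfolding r13_eq GR_def x by (auto intro!: GS_I x)
  next
    case False
    have h0: "Has J a b c" unfolding Has_def using x xJ by (intro exI[of _ d] exI[of _ e] exI[of _ h] exI[of _ \<alpha>] exI[of _ \<sigma>]) simp
    have h1: "Has J b (2*c) 0" using Has_br[OF Has_GA[of 1 0 0] h0 Jb] by simp
    have h2: "Has J (2*c) 0 0" using Has_br[OF Has_GA[of 1 0 0] h1 Jb] by simp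
    have u: "Has J 1 0 0"
    proof (cases "c = 0")
      case False show ?thesis by (rule Has_scale1[OF Js h2, where k="2*c"]) (use False in auto)
    next
      case c: True
      show ?thesis
      proof (cases "b = 0")
        case False show ?thesis by (rule Has_scale1[OF Js h1, where k=b]) (use False c in auto)
      next
        case True show ?thesis
          by (rule Has_scale1[OF Js h0, where k=a]) (use True c False in auto)
      qed
    qed
    have v0: "Has J 0 (-2) 0" using Has_br[OF Has_GA[of 0 0 1] u Jb] by simp
    have v: "Has J 0 1 0" by (rule Has_scale1[OF Js v0, where k="-2"]) auto
    have t0: "Has J 0 0 (-1)" using Has_br[OF Has_GA[of 0 0 1] v Jb] by simp
    have t: "Has J 0 0 1" by (rule Has_scale1[OF Js t0, where k="-1"]) auto
    have all: "Has (derived J k) 1 0 0 \<and> Has (derived J k) 0 1 0 \<and> Has (derived J k) 0 0 1" for k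
    proof (induction k)
      case 0 then show ?case using u v t by simp
    next
      case (Suc k)
      have B: "\<forall>x\<in>derived J k. \<forall>y\<in>derived J k. vf_bracket x y \<in> derived J (Suc k)"
        using derived_br by blast
      have S: "vf_subspace (derived J (Suc k))" by (rule derived_sub[OF Js])
      have 1: "Has (derived J (Suc k)) 1 0 0" using Has_br[OF _ _ B, of 1 0 0 0 1 0] Suc by simp
      have 2: "Has (derived J (Suc k)) 0 0 1" using Has_br[OF _ _ B, of 0 1 0 0 0 1] Suc by simp
      have w0: "Has (derived J (Suc k)) 0 2 0" using Has_br[OF _ _ B, of 1 0 0 0 0 1] Suc by simp
      have 3: "Has (derived J (Suc k)) 0 1 0" by (rule Has_scale1[OF S w0, where k=2]) auto
      show ?case using 1 2 3 by simp
    qed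
    obtain k where k: "derived J k = {\<lambda>p. 0}" using sv unfolding solvable_def by blast
    from all[of k] obtain d e h \<alpha> \<sigma> where "Gf 1 0 0 d e h \<alpha> \<sigma> \<in> {\<lambda>p. 0}"
      unfolding k Has_def by blast
    then have "Gf 1 0 0 d e h \<alpha> \<sigma> (0, 0, 0) = 0" by simp
    then show ?thesis by (simp add: Gf_def zero_prod_def)
  qed
qed

theorem lemma1:
  shows "is_radical a13 r13"
  unfolding is_radical_def solvable_ideal_def
  using r13_ideal r13_solvable maximal[unfolded solvable_ideal_def] by blast


end
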